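(* Assume $0\le P_F(j)<P_D(j)\le1$. Then $\frac{\partial^2}{\partial P_j^2}J(P_1,\dots,P_K)\le0$ for all $P_j\ge0$ (and all $P_i\ge 0$, $i\ne j$) if and only if $$\frac34-\frac12P_F(j)-\frac14\sqrt{1+12P_F(j)-12P_F(j)^2}\ \le\ P_D(j)\ \le\ \frac34-\frac12P_F(j)+\frac14\sqrt{1+12P_F(j)-12P_F(j)^2}.$$
   Context: Fix $K\ge1$, $\sigma^2>0$, and for $j=1,\dots,K$ channel gains $g_j>0$ and local probabilities $P_D(j),P_F(j)\in[0,1]$. Define $\alpha_F(j)=P_F(j)(1-P_D(j))+P_D(j)(P_D(j)-P_F(j))$, $\alpha_D(j)=P_D(j)(1-P_F(j))-P_F(j)(P_D(j)-P_F(j))$, $\beta_F(j)=P_D(j)(1-P_D(j))$, $\beta_D(j)=P_F(j)(1-P_F(j))$, and for $P_1,\dots,P_K\ge0$ $$J(P_1,\dots,P_K)=\sum_{j=1}^K\left[\frac{\sigma^2+\alpha_F(j)g_jP_j}{\sigma^2+\beta_F(j)g_jP_j}+\frac{\sigma^2+\alpha_D(j)g_jP_j}{\sigma^2+\beta_D(j)g_jP_j}\right].$$ *)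

theory Defs
  imports "HOL-Analysis.Analysis"
begin

definition alphaF :: "real \<Rightarrow> real \<Rightarrow> real" where
  "alphaF pd pf = pf * (1 - pd) + pd * (pd - pf)"

definition alphaD :: "real \<Rightarrow> real \<Rightarrow> real" where
  "alphaD pd pf = pd * (1 - pf) - pf * (pd - pf)"

definition betaF :: "real \<Rightarrow> real \<Rightarrow> real" where
  "betaF pd pf = pd * (1 - pd)"

definition betaD :: "real \<Rightarrow> real \<Rightarrow> real" where
  "betaD pd pf = pf * (1 - pf)"

text \<open>The objective J(P_1,...,P_K); sensors are indexed by {1..K}, the powers
  form a function P :: nat => real (values outside {1..K} are irrelevant).\<close>
definition Jfun :: "nat \<Rightarrow> real \<Rightarrow> (nat \<Rightarrow> real) \<Rightarrow> (nat \<Rightarrow> real) \<Rightarrow> (nat \<Rightarrow> real)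
    \<Rightarrow> (nat \<Rightarrow> real) \<Rightarrow> real" where
  "Jfun K \<sigma>2 g PD PF P =
     (\<Sum>j=1..K. (\<sigma>2 + alphaF (PD j) (PF j) * g j * P j) / (\<sigma>2 + betaF (PD j) (PF j) * g j * P j)
              + (\<sigma>2 + alphaD (PD j) (PF j) * g j * P j) / (\<sigma>2 + betaD (PD j) (PF j) * g j * P j))"

end

theory Submission
  imports Defs
begin

lemma d1:
  fixes s a b t :: real
  assumes "s + b*t > 0"
  shows "((\<lambda>t. (s + a*t)/(s + b*t)) has_real_derivative s*(a-b)/(s+b*t)^2) (at t)"
  using assms
  by (auto intro!: derivative_eq_intros simp: field_simps power2_eq_square)

lemma aux_u:
  fixes u c b :: real
  assumes "u \<noteq> 0"
  shows "- (c * (2 * (b * u)) / u ^ 4) = 2 * b * (- c) / u ^ 3"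
  using assms by (simp add: field_simps eval_nat_numeral)

lemma d2:
  fixes s a b t :: real
  assumes "s + b*t > 0"
  shows "((\<lambda>t. s*(a-b)/(s+b*t)^2) has_real_derivative (2 * s * b * (b-a) / (s+b*t)^3)) (at t)"
proof -
  have ne: "s + b*t \<noteq> 0" using assms by simp
  show ?thesis
    apply (rule derivative_eq_intros refl | simp add: ne)+
    using aux_u[OF ne, of "s*(a-b)" b] by (simp add: algebra_simps)
qed

lemma key:
  fixes d f s x :: real
  assumes s: "s > 0" and x: "x \<ge> 0" and f0: "0 \<le> f" and fd: "f < d" and d1: "d \<le> 1"
    and poly: "2*d^2+2*d*f+2*f^2-3*d-3*f+1 \<le> 0"
  shows "d*(1-d)*(1-2*d)/(s+d*(1-d)*x)^3 + f*(1-f)*(2*f-1)/(s+f*(1-f)*x)^3 \<le> 0"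
proof -
  define A where "A = d*(1-d)"
  define B where "B = f*(1-f)"
  define p where "p = s + A*x"
  define q where "q = s + B*x"
  have A0: "A \<ge> 0" using f0 fd d1 unfolding A_def by (intro mult_nonneg_nonneg) auto
  have B0: "B \<ge> 0" using f0 fd d1 unfolding B_def by (intro mult_nonneg_nonneg) auto
  have p0: "p > 0" using A0 x s unfolding p_def by (simp add: add_pos_nonneg)
  have q0: "q > 0" using B0 x s unfolding q_def by (simp add: add_pos_nonneg)
  have h: "A*(1-2*d) \<le> B*(1-2*f)"
  proof -
    have "A*(1-2*d) - B*(1-2*f) = (d-f)*(2*d^2+2*d*f+2*f^2-3*d-3*f+1)"
      unfolding A_def B_def by (simp add: algebra_simps power2_eq_square)
    also have "\<dots> \<le> 0" using fd poly by (simp add: mult_nonneg_nonpos)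
    finally show ?thesis by simp
  qed
  have goal: "A*(1-2*d)*q^3 + B*(2*f-1)*p^3 \<le> 0"
  proof (cases "d \<ge> 1/2 \<and> f \<le> 1/2")
    case True
    have "A*(1-2*d)*q^3 \<le> 0" using True A0 q0 by (intro mult_nonpos_nonneg mult_nonneg_nonpos) auto
    moreover have "B*(2*f-1)*p^3 \<le> 0" using True B0 p0 by (intro mult_nonpos_nonneg mult_nonneg_nonpos) auto
    ultimately show ?thesis by linarith
  next
    case False
    then consider "d < 1/2" | "f > 1/2" by linarith
    then show ?thesis
    proof cases
      case 1
      have "A - B = (d-f)*(1-d-f)" unfolding A_def B_def by (simp add: algebra_simps)
      also have "\<dots> \<ge> 0" using 1 fd by (intro mult_nonneg_nonneg) auto
      finally have AB: "B \<le> A" by simp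
      have "q \<le> p" unfolding p_def q_def using AB x by (simp add: mult_right_mono)
      hence "q^3 \<le> p^3" using q0 by (simp add: power_mono)
      have c: "A*(1-2*d) \<ge> 0" using A0 1 by simp
      have "A*(1-2*d)*q^3 \<le> A*(1-2*d)*p^3" using c \<open>q^3 \<le> p^3\<close> by (intro mult_left_mono)
      also have "\<dots> \<le> B*(1-2*f)*p^3" using h p0 by (simp add: mult_right_mono)
      finally show ?thesis by (simp add: algebra_simps)
    next
      case 2
      have "B - A = (d-f)*(d+f-1)" unfolding A_def B_def by (simp add: algebra_simps)
      also have "\<dots> \<ge> 0" using 2 fd by (intro mult_nonneg_nonneg) auto
      finally have AB: "A \<le> B" by simp
      have "p \<le> q" unfolding p_def q_def using AB x by (simp add: mult_right_mono)
      hence "p^3 \<le> q^3" using p0 by (simp add: power_mono)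
      have c: "B*(2*f-1) \<ge> 0" using B0 2 by simp
      have "B*(2*f-1)*p^3 \<le> B*(2*f-1)*q^3" using c \<open>p^3 \<le> q^3\<close> by (intro mult_left_mono)
      also have "\<dots> \<le> A*(2*d-1)*q^3" using h q0 by (intro mult_right_mono) (auto simp: algebra_simps)
      finally show ?thesis by (simp add: algebra_simps)
    qed
  qed
  have "A*(1-2*d)/p^3 + B*(2*f-1)/q^3 = (A*(1-2*d)*q^3 + B*(2*f-1)*p^3)/(p^3*q^3)"
    using p0 q0 by (simp add: field_simps)
  also have "\<dots> \<le> 0" using goal p0 q0 by (simp add: divide_nonpos_pos)
  finally show ?thesis unfolding A_def B_def p_def q_def .
qed

lemma sqrt_part:
  fixes d f :: real
  assumes "0 \<le> f" "f \<le> 1"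
  shows "(2*d^2+2*d*f+2*f^2-3*d-3*f+1 \<le> 0) \<longleftrightarrow>
    (3/4 - f / 2 - sqrt (1 + 12 * f - 12 * f^2) / 4 \<le> d \<and>
          d \<le> 3/4 - f / 2 + sqrt (1 + 12 * f - 12 * f^2) / 4)"
proof -
  have e: "(4*d-3+2*f)^2 = 16*d^2 + 9 + 4*f^2 - 24*d + 16*d*f - 12*f"
    by (simp add: power2_eq_square algebra_simps)
  have "(2*d^2+2*d*f+2*f^2-3*d-3*f+1 \<le> 0) \<longleftrightarrow> (4*d-3+2*f)^2 \<le> 1 + 12 * f - 12 * f^2"
    unfolding e by linarith
  also have "\<dots> \<longleftrightarrow> \<bar>4*d-3+2*f\<bar> \<le> sqrt (1 + 12 * f - 12 * f^2)"
    by (metis real_sqrt_abs real_sqrt_le_iff)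
  also have "\<dots> \<longleftrightarrow> (3/4 - f / 2 - sqrt (1 + 12 * f - 12 * f^2) / 4 \<le> d \<and>
          d \<le> 3/4 - f / 2 + sqrt (1 + 12 * f - 12 * f^2) / 4)"
    unfolding abs_le_iff by (intro iffI conjI; linarith)
  finally show ?thesis .
qed


lemma second_deriv:
  fixes K :: nat and \<sigma>2 :: real and g PD PF P :: "nat \<Rightarrow> real" and j :: nat
  assumes s0: "\<sigma>2 > 0" and jK: "j \<in> {1..K}" and gj: "g j > 0"
    and bF0: "betaF (PD j) (PF j) \<ge> 0" and bD0: "betaD (PD j) (PF j) \<ge> 0"
    and Pj: "P j \<ge> 0"
  shows "deriv (\<lambda>s. deriv (\<lambda>t. Jfun K \<sigma>2 g PD PF (P(j := t))) s) (P j) =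
     2 * \<sigma>2 * (betaF (PD j) (PF j) * g j) * (betaF (PD j) (PF j) * g j - alphaF (PD j) (PF j) * g j)
        / (\<sigma>2 + betaF (PD j) (PF j) * g j * P j)^3
   + 2 * \<sigma>2 * (betaD (PD j) (PF j) * g j) * (betaD (PD j) (PF j) * g j - alphaD (PD j) (PF j) * g j)
        / (\<sigma>2 + betaD (PD j) (PF j) * g j * P j)^3"
proof -
  define aF where "aF = alphaF (PD j) (PF j) * g j"
  define bF where "bF = betaF (PD j) (PF j) * g j"
  define aD where "aD = alphaD (PD j) (PF j) * g j"
  define bD where "bD = betaD (PD j) (PF j) * g j"
  define T where "T = (\<lambda>i (x::real). (\<sigma>2 + alphaF (PD i) (PF i) * g i * x) / (\<sigma>2 + betaF (PD i) (PF i) * g i * x)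
              + (\<sigma>2 + alphaD (PD i) (PF i) * g i * x) / (\<sigma>2 + betaD (PD i) (PF i) * g i * x))"
  define C where "C = (\<Sum>i\<in>{1..K} - {j}. T i (P i))"
  have bF0': "bF \<ge> 0" unfolding bF_def using bF0 gj by simp
  have bD0': "bD \<ge> 0" unfolding bD_def using bD0 gj by simp
  have phi: "Jfun K \<sigma>2 g PD PF (P(j := t)) = C + T j t" for t
  proof -
    have "Jfun K \<sigma>2 g PD PF (P(j := t)) = (\<Sum>i\<in>{1..K}. T i ((P(j := t)) i))"
      unfolding Jfun_def T_def by simp
    also have "\<dots> = T j t + (\<Sum>i\<in>{1..K} - {j}. T i ((P(j := t)) i))"
      using jK by (subst sum.remove[of "{1..K}" j]) auto
    also have "(\<Sum>i\<in>{1..K} - {j}. T i ((P(j := t)) i)) = C"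
      unfolding C_def by (rule sum.cong) auto
    finally show ?thesis by (simp only: add.commute)
  qed
  have Tj: "T j t = (\<sigma>2 + aF * t) / (\<sigma>2 + bF * t) + (\<sigma>2 + aD * t) / (\<sigma>2 + bD * t)" for t
    unfolding T_def aF_def bF_def aD_def bD_def by (simp add: mult.assoc)
  define S where "S = {t. 0 < \<sigma>2 + bF * t \<and> 0 < \<sigma>2 + bD * t}"
  have openS: "open S" unfolding S_def
    by (intro open_Collect_conj open_Collect_less continuous_intros)
  have PjS: "P j \<in> S" unfolding S_def using s0 bF0' bD0' Pj
    by (auto intro!: add_pos_nonneg)
  define G1 where "G1 = (\<lambda>t. \<sigma>2 * (aF - bF) / (\<sigma>2 + bF * t)^2 + \<sigma>2 * (aD - bD) / (\<sigma>2 + bD * t)^2)"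
  have dphi: "deriv (\<lambda>t. Jfun K \<sigma>2 g PD PF (P(j := t))) x = G1 x" if "x \<in> S" for x
  proof -
    have "((\<lambda>t. C + ((\<sigma>2 + aF * t) / (\<sigma>2 + bF * t) + (\<sigma>2 + aD * t) / (\<sigma>2 + bD * t)))
       has_real_derivative 0 + G1 x) (at x)"
      unfolding G1_def
      by (intro DERIV_add DERIV_const d1) (use that in \<open>auto simp: S_def\<close>)
    then show ?thesis unfolding phi Tj by (intro DERIV_imp_deriv) simp
  qed
  have "(G1 has_real_derivative
      (2 * \<sigma>2 * bF * (bF - aF) / (\<sigma>2 + bF * P j)^3 + 2 * \<sigma>2 * bD * (bD - aD) / (\<sigma>2 + bD * P j)^3)) (at (P j))"
    unfolding G1_def
    by (intro DERIV_add d2) (use PjS in \<open>auto simp: S_def\<close>)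
  then have "((\<lambda>s. deriv (\<lambda>t. Jfun K \<sigma>2 g PD PF (P(j := t))) s) has_real_derivative
      (2 * \<sigma>2 * bF * (bF - aF) / (\<sigma>2 + bF * P j)^3 + 2 * \<sigma>2 * bD * (bD - aD) / (\<sigma>2 + bD * P j)^3)) (at (P j))"
    by (rule has_field_derivative_transform_within_open[OF _ openS PjS]) (simp add: dphi)
  then show ?thesis unfolding aF_def bF_def aD_def bD_def
    by (intro DERIV_imp_deriv) (simp add: mult.assoc)
qed


theorem lemma3:
  fixes K :: nat and \<sigma>2 :: real and g PD PF :: "nat \<Rightarrow> real" and j :: nat
  assumes "K \<ge> 1" and "\<sigma>2 > 0"
    and "\<And>i. i \<in> {1..K} \<Longrightarrow> g i > 0"
    and "\<And>i. i \<in> {1..K} \<Longrightarrow> 0 \<le> PD i \<and> PD i \<le> 1"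
    and "\<And>i. i \<in> {1..K} \<Longrightarrow> 0 \<le> PF i \<and> PF i \<le> 1"
    and "j \<in> {1..K}"
    and "0 \<le> PF j" and "PF j < PD j" and "PD j \<le> 1"
  shows "(\<forall>P :: nat \<Rightarrow> real. (\<forall>i\<in>{1..K}. P i \<ge> 0) \<longrightarrow>
            deriv (\<lambda>s. deriv (\<lambda>t. Jfun K \<sigma>2 g PD PF (P(j := t))) s) (P j) \<le> 0)
     \<longleftrightarrow>
         (3/4 - PF j / 2 - sqrt (1 + 12 * PF j - 12 * (PF j)^2) / 4 \<le> PD j \<and>
          PD j \<le> 3/4 - PF j / 2 + sqrt (1 + 12 * PF j - 12 * (PF j)^2) / 4)"
proof -
  define d where "d = PD j"
  define f where "f = PF j"
  define gj where "gj = g j"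
  have s0: "\<sigma>2 > 0" using assms by simp
  have gj0: "gj > 0" unfolding gj_def using assms by simp
  have f0: "0 \<le> f" and fd: "f < d" and d1: "d \<le> 1" using assms unfolding d_def f_def by auto
  have bF0: "betaF (PD j) (PF j) \<ge> 0" using fd f0 d1 unfolding betaF_def d_def f_def
    by (intro mult_nonneg_nonneg) auto
  have bD0: "betaD (PD j) (PF j) \<ge> 0" using fd f0 d1 unfolding betaD_def d_def f_def
    by (intro mult_nonneg_nonneg) auto
  define E where "E = (\<lambda>x. d*(1-d)*(1-2*d)/(\<sigma>2+d*(1-d)*x)^3 + f*(1-f)*(2*f-1)/(\<sigma>2+f*(1-f)*x)^3)"
  have main: "deriv (\<lambda>s. deriv (\<lambda>t. Jfun K \<sigma>2 g PD PF (P(j := t))) s) (P j)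
      = 2 * \<sigma>2 * gj^2 * (d - f) * E (gj * P j)" if "P j \<ge> 0" for P
  proof -
    have e1: "betaF (PD j) (PF j) * g j * P j = d*(1-d)*(gj * P j)"
      unfolding betaF_def d_def gj_def by simp
    have e2: "betaD (PD j) (PF j) * g j * P j = f*(1-f)*(gj * P j)"
      unfolding betaD_def f_def gj_def by simp
    have e3: "2 * \<sigma>2 * (betaF (PD j) (PF j) * g j) * (betaF (PD j) (PF j) * g j - alphaF (PD j) (PF j) * g j)
       = 2 * \<sigma>2 * gj^2 * (d - f) * (d*(1-d)*(1-2*d))"
      unfolding betaF_def alphaF_def d_def f_def gj_def by (simp add: algebra_simps power2_eq_square)
    have e4: "2 * \<sigma>2 * (betaD (PD j) (PF j) * g j) * (betaD (PD j) (PF j) * g j - alphaD (PD j) (PF j) * g j)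
       = 2 * \<sigma>2 * gj^2 * (d - f) * (f*(1-f)*(2*f-1))"
      unfolding betaD_def alphaD_def d_def f_def gj_def by (simp add: algebra_simps power2_eq_square)
    show ?thesis
      unfolding second_deriv[where K=K and g=g and PD=PD and PF=PF and P=P and j=j, OF s0 assms(6) assms(3)[OF assms(6)] bF0 bD0 that] e1 e2 e3 e4 E_def
      by (simp add: distrib_left)
  qed
  have Epoly: "E x \<le> 0" if "x \<ge> 0" and "2*d^2+2*d*f+2*f^2-3*d-3*f+1 \<le> 0" for x
    unfolding E_def by (rule key[OF s0 that(1) f0 fd d1 that(2)])
  have cpos: "2 * \<sigma>2 * gj^2 * (d - f) > 0" using s0 gj0 fd by simp
  have "(\<forall>P :: nat \<Rightarrow> real. (\<forall>i\<in>{1..K}. P i \<ge> 0) \<longrightarrow>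
            deriv (\<lambda>s. deriv (\<lambda>t. Jfun K \<sigma>2 g PD PF (P(j := t))) s) (P j) \<le> 0)
     \<longleftrightarrow> 2*d^2+2*d*f+2*f^2-3*d-3*f+1 \<le> 0"
  proof
    assume H: "\<forall>P :: nat \<Rightarrow> real. (\<forall>i\<in>{1..K}. P i \<ge> 0) \<longrightarrow>
            deriv (\<lambda>s. deriv (\<lambda>t. Jfun K \<sigma>2 g PD PF (P(j := t))) s) (P j) \<le> 0"
    have "deriv (\<lambda>s. deriv (\<lambda>t. Jfun K \<sigma>2 g PD PF ((\<lambda>_. 0)(j := t))) s) ((\<lambda>_::nat. 0::real) j) \<le> 0"
      using H by auto
    then have "2 * \<sigma>2 * gj^2 * (d - f) * E 0 \<le> 0" using main[of "\<lambda>_. 0"] by simp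
    then have E0: "E 0 \<le> 0" using cpos by (smt (verit) mult_pos_pos)
    have "E 0 = (d-f)*(2*d^2+2*d*f+2*f^2-3*d-3*f+1) / \<sigma>2^3"
      unfolding E_def by (simp add: add_divide_distrib[symmetric]) (simp add: algebra_simps power2_eq_square)
    then have "(d-f)*(2*d^2+2*d*f+2*f^2-3*d-3*f+1) \<le> 0" using E0 s0
      by (simp add: divide_le_0_iff)
    then show "2*d^2+2*d*f+2*f^2-3*d-3*f+1 \<le> 0" using fd by (simp add: mult_le_0_iff)
  next
    assume p: "2*d^2+2*d*f+2*f^2-3*d-3*f+1 \<le> 0"
    show "\<forall>P :: nat \<Rightarrow> real. (\<forall>i\<in>{1..K}. P i \<ge> 0) \<longrightarrow>
            deriv (\<lambda>s. deriv (\<lambda>t. Jfun K \<sigma>2 g PD PF (P(j := t))) s) (P j) \<le> 0"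
    proof (intro allI impI)
      fix P :: "nat \<Rightarrow> real"
      assume "\<forall>i\<in>{1..K}. P i \<ge> 0"
      then have Pj: "P j \<ge> 0" using assms(6) by auto
      have "E (gj * P j) \<le> 0" using Epoly[OF _ p] Pj gj0 by simp
      then show "deriv (\<lambda>s. deriv (\<lambda>t. Jfun K \<sigma>2 g PD PF (P(j := t))) s) (P j) \<le> 0"
        unfolding main[of P, OF Pj] using cpos by (simp add: mult_le_0_iff)
    qed
  qed
  also have "\<dots> \<longleftrightarrow> (3/4 - PF j / 2 - sqrt (1 + 12 * PF j - 12 * (PF j)^2) / 4 \<le> PD j \<and>
          PD j \<le> 3/4 - PF j / 2 + sqrt (1 + 12 * PF j - 12 * (PF j)^2) / 4)"
    unfolding d_def f_def by (rule sqrt_part) (use assms in auto)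
  finally show ?thesis .
qed

end
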